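(* Let $p\in(1,\infty)$ and let $s\ge 2$ be an integer. For an integer $b$ with $0\le b\le s$, let $f(b)=\min_{c\in\mathbb{R}}\big((s-b)|c|^p+b|1-c|^p\big)$, the contribution to the $\operatorname{dist}_p$-cost of a cluster of $s$ vectors with entries in $\{0,1\}$ from a coordinate in which exactly $b$ of the vectors have value $1$ and $s-b$ have value $0$. Then $f(b)/b$ is strictly decreasing in $b$ for $0<b<s$.
   Context: For $p>0$, $\operatorname{dist}_p(x,y)=\sum_{i=1}^d|x[i]-y[i]|^p$; the cost of a cluster $C$ is $\min_{c\in\mathbb{R}^d}\sum_{x\in C}\operatorname{dist}_p(x,c)$, which decomposes as a sum over coordinates of the optimal one-dimensional contributions. *)

theory Defs
  imports "HOL-Analysis.Analysis"
begin

text \<open>One-coordinate contribution to the dist_p cost of a cluster of s binary vectors,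
  b of which have value 1 in that coordinate: min over c of (s-b)|c|^p + b|1-c|^p.
  The minimum is attained, so it coincides with the infimum.\<close>
definition coord_cost :: "real \<Rightarrow> nat \<Rightarrow> nat \<Rightarrow> real" where
  "coord_cost p s b = (INF c::real. real (s - b) * \<bar>c\<bar> powr p + real b * \<bar>1 - c\<bar> powr p)"

end

theory Submission
  imports Defs
begin

lemma min_exists:
  fixes p A B :: real
  assumes p: "1 < p" and A: "0 \<le> A" and B: "0 \<le> B"
  shows "\<exists>c0. \<forall>c. A * \<bar>c0\<bar> powr p + B * \<bar>1 - c0\<bar> powr p
                 \<le> A * \<bar>c\<bar> powr p + B * \<bar>1 - c\<bar> powr p"
proof -
  let ?h = "\<lambda>c::real. A * \<bar>c\<bar> powr p + B * \<bar>1 - c\<bar> powr p"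
  have "continuous_on {0..1} ?h"
    using p by (intro continuous_intros continuous_on_powr') auto
  then obtain c0 where c0: "c0 \<in> {0..1}" and m: "\<forall>y\<in>{0..1}. ?h c0 \<le> ?h y"
    using continuous_attains_inf[of "{0..1::real}" ?h] by auto
  have "?h c0 \<le> ?h c" for c
  proof (cases "c < 0")
    case True
    have "\<bar>1 - c\<bar> powr p \<ge> 1 powr p"
      using True p by (intro powr_mono2) auto
    hence "B * 1 \<le> B * \<bar>1 - c\<bar> powr p" using B p by (intro mult_left_mono) auto
    moreover have "0 \<le> A * \<bar>c\<bar> powr p" using A by simp
    ultimately have "?h 0 \<le> ?h c" using p by simp
    thus ?thesis using m by force
  next
    case False
    show ?thesis
    proof (cases "c > 1")
      case True
      have "\<bar>c\<bar> powr p \<ge> 1 powr p"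
        using True p by (intro powr_mono2) auto
      hence "A * 1 \<le> A * \<bar>c\<bar> powr p" using A by (intro mult_left_mono) auto
      moreover have "0 \<le> B * \<bar>1 - c\<bar> powr p" using B by simp
      ultimately have "?h 1 \<le> ?h c" using p by simp
      moreover have "?h c0 \<le> ?h 1" using m[rule_format, of 1] by simp
      ultimately show ?thesis by linarith
    next
      case False2: False
      thus ?thesis using m False by auto
    qed
  qed
  thus ?thesis by blast
qed

lemma below_one:
  fixes p a b :: real
  assumes p: "1 < p" and a: "0 < a" and b: "0 < b"
  shows "\<exists>c. a * \<bar>c\<bar> powr p + b * \<bar>1 - c\<bar> powr p < b"
proof -
  define c where "c = min (1/2) ((b/a) powr (1/(p-1)))"
  have c0: "0 < c" "c < 1" using a b by (auto simp: c_def)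
  have "c powr (p-1) \<le> ((b/a) powr (1/(p-1))) powr (p-1)"
    using p c0 by (intro powr_mono2) (auto simp: c_def)
  also have "\<dots> = b/a" using p a b by (simp add: powr_powr)
  finally have e: "c powr (p-1) \<le> b/a" .
  have "c powr p = c * c powr (p-1)"
    using c0 by (simp add: powr_mult_base)
  also have "\<dots> \<le> c * (b/a)" using e c0 by (intro mult_left_mono) auto
  finally have "a * c powr p \<le> b * c" using a by (simp add: field_simps)
  moreover have "(1-c) powr p < (1-c) powr 1"
    using c0 p by (intro powr_less_mono') auto
  hence "b * (1-c) powr p < b * (1-c)" using b c0 by simp
  ultimately have "a * \<bar>c\<bar> powr p + b * \<bar>1 - c\<bar> powr p < b"
    using c0 by (simp add: algebra_simps)
  thus ?thesis by blast
qed

theorem claim12: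
  fixes p :: real and s :: nat
  assumes "1 < p" and "2 \<le> s"
  shows "strict_antimono_on {b. 0 < b \<and> b < s} (\<lambda>b. coord_cost p s b / real b)"
proof (rule monotone_onI)
  fix b1 b2 assume b1: "b1 \<in> {b. 0 < b \<and> b < s}" and b2: "b2 \<in> {b. 0 < b \<and> b < s}"
    and lt: "b1 < b2"
  let ?h = "\<lambda>b c::real. real (s - b) * \<bar>c\<bar> powr p + real b * \<bar>1 - c\<bar> powr p"
  have bdd: "bdd_below (range (?h b))" for b
    by (rule bdd_belowI[of _ 0]) auto
  obtain c1 where c1: "\<And>c. ?h b1 c1 \<le> ?h b1 c"
    using min_exists[OF assms(1), of "real (s - b1)" "real b1"] by auto
  have f1: "coord_cost p s b1 = ?h b1 c1"
    unfolding coord_cost_def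
    by (rule antisym[OF cINF_lower[OF bdd] cINF_greatest]) (auto intro: c1)
  have f2: "coord_cost p s b2 \<le> ?h b2 c1"
    unfolding coord_cost_def by (rule cINF_lower[OF bdd]) auto
  obtain c where "?h b1 c < real b1"
    using below_one[OF assms(1), of "real (s - b1)" "real b1"] b1 by auto
  moreover have "?h b1 0 = real b1" by simp
  ultimately have "c1 \<noteq> 0" using c1[of c] by fastforce
  hence pos: "\<bar>c1\<bar> powr p > 0" by simp
  have r: "real (s - b2) / real b2 < real (s - b1) / real b1"
    using b1 b2 lt by (simp add: of_nat_diff field_simps)
  have "coord_cost p s b2 / real b2 \<le> ?h b2 c1 / real b2"
    using f2 b2 by (simp add: divide_right_mono)
  also have "\<dots> = real (s - b2) / real b2 * \<bar>c1\<bar> powr p + \<bar>1 - c1\<bar> powr p"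
    using b2 by (simp add: field_simps)
  also have "\<dots> < real (s - b1) / real b1 * \<bar>c1\<bar> powr p + \<bar>1 - c1\<bar> powr p"
    using mult_strict_right_mono[OF r pos] by simp
  also have "\<dots> = coord_cost p s b1 / real b1"
    using b1 f1 by (simp add: field_simps)
  finally show "coord_cost p s b2 / real b2 < coord_cost p s b1 / real b1" .
qed

end
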